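(* For every $T\in\mathcal M_{\mathcal G,\Gamma}$, the map $U\mapsto U^{-1}TU$ from $\mathcal A$ (with the weak topology) to $\mathcal M_{\mathcal G,\Gamma}$ (with the topology of the metric $\mathrm m_{\mathcal G,\Gamma}$) is continuous.
   Context: $(X,\Sigma,\mu)$ is a separable Lebesgue space with a non-atomic probability measure $\mu$. $\mathcal A$ is the group of invertible measure-preserving transformations of $X$, two transformations being identified if they agree outside a null set. Fix a countable family $\{A_i\}_{i\in\mathbb N}\subset\Sigma$ that generates $\Sigma$ and is dense in $\Sigma$ (for every $A\in\Sigma$ and $\varepsilon>0$ there is $i$ with $\mu(A_i\triangle A)<\varepsilon$). For $T,S\in\mathcal A$ put $\mathrm d(T,S)=\sum_{i}2^{-i}\big(\mu(TA_i\triangle SA_i)+\mu(T^{-1}A_i\triangle S^{-1}A_i)\big)$ and $\mathrm a(T,S)=\sum_{i,j}2^{-(i+j)}|\mu(TA_i\cap A_j)-\mu(SA_i\cap A_j)|$; the weak topology on $\mathcal A$ is the topology of $\mathrm d$. $\mathcal G$ is a Hausdorff locally compact group with a countable neighborhood base. Fix an at most countable family $\{K_i\}$ of compact subsets of $\mathcal G$ with nonempty interiors whose union contains a set generating $\mathcal G$. An action of $\mathcal G$ is a family $T=\{T^g\}_{g\in\mathcal G}\subset\mathcal A$ with $T^gT^h=T^{gh}$ for all $g,h$ and such that $g\mapsto\mu(T^gA\cap B)$ is continuous for all $A,B\in\Sigma$. For $U\in\mathcal A$ and an action $T$, $U^{-1}TU$ denotes the action $g\mapsto U^{-1}T^gU$.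 $\mathrm d_{\mathcal G}(T,S)=\sum_i 2^{-i}\sup_{g\in K_i}\mathrm d(T^g,S^g)$. Let $\Gamma\subset\mathcal G$ be an unbounded subset (not contained in any compact set). An action $T$ is $\Gamma$-mixing if for all $A,B\in\Sigma$ and $\varepsilon>0$ there is a compact $C\subset\mathcal G$ with $|\mu(T^gA\cap B)-\mu(A)\mu(B)|<\varepsilon$ for all $g\in\Gamma\setminus C$. $\mathcal M_{\mathcal G,\Gamma}$ is the set of all $\Gamma$-mixing actions with the leash metric $\mathrm m_{\mathcal G,\Gamma}(T,S)=\mathrm d_{\mathcal G}(T,S)+\sup_{g\in\Gamma}\mathrm a(T^g,S^g)$. *)

theory Defs
  imports "HOL-Probability.Probability"
begin

definition atomless :: "'a measure \<Rightarrow> bool" where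
  "atomless M \<longleftrightarrow> (\<forall>A\<in>sets M. measure M A > 0 \<longrightarrow>
      (\<exists>B\<in>sets M. B \<subseteq> A \<and> 0 < measure M B \<and> measure M B < measure M A))"

definition generating_dense_family :: "'a measure \<Rightarrow> (nat \<Rightarrow> 'a set) \<Rightarrow> bool" where
  "generating_dense_family M Af \<longleftrightarrow>
     range Af \<subseteq> sets M \<and>
     (\<forall>B\<in>sets M. \<exists>C\<in>sigma_sets (space M) (range Af). B \<subseteq> space M \<and>
         measure M ((B - C) \<union> (C - B)) = 0 \<and> (B - C) \<union> (C - B) \<in> sets M) \<and>
     (\<forall>B\<in>sets M. \<forall>e>0. \<exists>i. measure M ((Af i - B) \<union> (B - Af i)) < e)"

definition meas_pres :: "'a measure \<Rightarrow> ('a \<Rightarrow> 'a) \<Rightarrow> bool" where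
  "meas_pres M T \<longleftrightarrow> T \<in> measurable M M \<and> distr M M T = M"

definition aut :: "'a measure \<Rightarrow> ('a \<Rightarrow> 'a) \<Rightarrow> bool" where
  "aut M T \<longleftrightarrow> bij_betw T (space M) (space M) \<and> meas_pres M T \<and>
      meas_pres M (the_inv_into (space M) T)"

definition ainv :: "'a measure \<Rightarrow> ('a \<Rightarrow> 'a) \<Rightarrow> ('a \<Rightarrow> 'a)" where
  "ainv M T = the_inv_into (space M) T"

definition symd :: "'a set \<Rightarrow> 'a set \<Rightarrow> 'a set" where
  "symd A B = (A - B) \<union> (B - A)"

definition dW :: "'a measure \<Rightarrow> (nat \<Rightarrow> 'a set) \<Rightarrow> ('a \<Rightarrow> 'a) \<Rightarrow> ('a \<Rightarrow> 'a) \<Rightarrow> real" where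
  "dW M Af T S = (\<Sum>i. (1/2)^i * (measure M (symd (T ` Af i) (S ` Af i))
      + measure M (symd (ainv M T ` Af i) (ainv M S ` Af i))))"

definition aW :: "'a measure \<Rightarrow> (nat \<Rightarrow> 'a set) \<Rightarrow> ('a \<Rightarrow> 'a) \<Rightarrow> ('a \<Rightarrow> 'a) \<Rightarrow> real" where
  "aW M Af T S = (\<Sum>i. \<Sum>j. (1/2)^(i+j) *
      \<bar>measure M (T ` Af i \<inter> Af j) - measure M (S ` Af i \<inter> Af j)\<bar>)"

inductive_set gen_subgroup :: "'g::group_add set \<Rightarrow> 'g set" for S where
  gen_zero: "0 \<in> gen_subgroup S"
| gen_base: "s \<in> S \<Longrightarrow> s \<in> gen_subgroup S"
| gen_add: "a \<in> gen_subgroup S \<Longrightarrow> b \<in> gen_subgroup S \<Longrightarrow> a + b \<in> gen_subgroup S"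
| gen_uminus: "a \<in> gen_subgroup S \<Longrightarrow> - a \<in> gen_subgroup S"

definition admissible_compacts :: "nat set \<Rightarrow> (nat \<Rightarrow> 'g::{topological_group_add} set) \<Rightarrow> bool" where
  "admissible_compacts I K \<longleftrightarrow> (\<forall>i\<in>I. compact (K i) \<and> interior (K i) \<noteq> {}) \<and>
     (\<exists>S. S \<subseteq> (\<Union>i\<in>I. K i) \<and> gen_subgroup S = UNIV)"

definition is_action :: "'a measure \<Rightarrow> ('g::topological_group_add \<Rightarrow> 'a \<Rightarrow> 'a) \<Rightarrow> bool" where
  "is_action M T \<longleftrightarrow> (\<forall>g. aut M (T g)) \<and>
     (\<forall>g h. AE x in M. T g (T h x) = T (g + h) x) \<and>
     (\<forall>A\<in>sets M. \<forall>B\<in>sets M. continuous_on UNIV (\<lambda>g. measure M (T g ` A \<inter> B)))"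

definition conj_action :: "'a measure \<Rightarrow> ('a \<Rightarrow> 'a) \<Rightarrow> ('g \<Rightarrow> 'a \<Rightarrow> 'a) \<Rightarrow> ('g \<Rightarrow> 'a \<Rightarrow> 'a)" where
  "conj_action M U T = (\<lambda>g. ainv M U \<circ> T g \<circ> U)"

definition dG :: "'a measure \<Rightarrow> (nat \<Rightarrow> 'a set) \<Rightarrow> nat set \<Rightarrow> (nat \<Rightarrow> 'g set)
    \<Rightarrow> ('g \<Rightarrow> 'a \<Rightarrow> 'a) \<Rightarrow> ('g \<Rightarrow> 'a \<Rightarrow> 'a) \<Rightarrow> real" where
  "dG M Af I K T S = (\<Sum>i. if i \<in> I then (1/2)^i * (SUP g\<in>K i. dW M Af (T g) (S g)) else 0)"

definition mixing :: "'a measure \<Rightarrow> 'g::topological_group_add set \<Rightarrow> ('g \<Rightarrow> 'a \<Rightarrow> 'a) \<Rightarrow> bool" where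
  "mixing M \<Gamma> T \<longleftrightarrow> (\<forall>A\<in>sets M. \<forall>B\<in>sets M. \<forall>e>0. \<exists>C. compact C \<and>
      (\<forall>g\<in>\<Gamma> - C. \<bar>measure M (T g ` A \<inter> B) - measure M A * measure M B\<bar> < e))"

definition mixing_actions :: "'a measure \<Rightarrow> 'g::topological_group_add set \<Rightarrow> ('g \<Rightarrow> 'a \<Rightarrow> 'a) set" where
  "mixing_actions M \<Gamma> = {T. is_action M T \<and> mixing M \<Gamma> T}"

definition leash :: "'a measure \<Rightarrow> (nat \<Rightarrow> 'a set) \<Rightarrow> nat set \<Rightarrow> (nat \<Rightarrow> 'g set) \<Rightarrow> 'g set
    \<Rightarrow> ('g \<Rightarrow> 'a \<Rightarrow> 'a) \<Rightarrow> ('g \<Rightarrow> 'a \<Rightarrow> 'a) \<Rightarrow> real" where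
  "leash M Af I K \<Gamma> T S = dG M Af I K T S + (SUP g\<in>\<Gamma>. aW M Af (T g) (S g))"

end

theory Submission
  imports Defs
begin


definition mpb :: "'a measure \<Rightarrow> ('a \<Rightarrow> 'a) \<Rightarrow> bool" where
  "mpb M W \<longleftrightarrow> bij_betw W (space M) (space M) \<and>
     (\<forall>A\<in>sets M. W ` A \<in> sets M \<and> measure M (W ` A) = measure M A)"

context prob_space begin

lemma symd_sets: "A \<in> sets M \<Longrightarrow> B \<in> sets M \<Longrightarrow> symd A B \<in> sets M"
  unfolding symd_def by auto

lemma measure_symd: assumes "A \<in> sets M" "B \<in> sets M"
  shows "measure M (symd A B) = measure M A + measure M B - 2 * measure M (A \<inter> B)"
proof -
  have "measure M (symd A B) = measure M (A - B) + measure M (B - A)"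
    unfolding symd_def using assms by (intro finite_measure_Union) auto
  also have "\<dots> = measure M A + measure M B - 2 * measure M (A \<inter> B)"
    using assms by (simp add: finite_measure_Diff' Int_commute)
  finally show ?thesis .
qed

lemma symd_tri: assumes "A \<in> sets M" "B \<in> sets M" "C \<in> sets M"
  shows "measure M (symd A C) \<le> measure M (symd A B) + measure M (symd B C)"
proof -
  have "measure M (symd A C) \<le> measure M (symd A B \<union> symd B C)"
    using assms by (intro finite_measure_mono) (auto simp: symd_def)
  also have "\<dots> \<le> measure M (symd A B) + measure M (symd B C)"
    using assms by (intro measure_Un_le symd_sets)
  finally show ?thesis .
qed

lemma symd_comm: "symd A B = symd B A" unfolding symd_def by auto

lemma symd_nonneg: "0 \<le> measure M (symd A B)" by simp

lemma abs_measure_symd: assumes "A \<in> sets M" "B \<in> sets M"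
  shows "\<bar>measure M A - measure M B\<bar> \<le> measure M (symd A B)"
proof -
  have "measure M A \<le> measure M (B \<union> symd A B)"
    using assms by (intro finite_measure_mono) (auto simp: symd_def)
  also have "\<dots> \<le> measure M B + measure M (symd A B)"
    using assms by (intro measure_Un_le symd_sets)
  finally have 1: "measure M A \<le> measure M B + measure M (symd A B)" .
  have "measure M B \<le> measure M (A \<union> symd A B)"
    using assms by (intro finite_measure_mono) (auto simp: symd_def)
  also have "\<dots> \<le> measure M A + measure M (symd A B)"
    using assms by (intro measure_Un_le symd_sets)
  finally have 2: "measure M B \<le> measure M A + measure M (symd A B)" .
  from 1 2 show ?thesis by linarith
qed

lemma abs_measure_Int: assumes "X \<in> sets M" "Y \<in> sets M" "Z \<in> sets M" "W \<in> sets M"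
  shows "\<bar>measure M (X \<inter> Z) - measure M (Y \<inter> W)\<bar> \<le> measure M (symd X Y) + measure M (symd Z W)"
proof -
  have "\<bar>measure M (X \<inter> Z) - measure M (Y \<inter> W)\<bar> \<le> measure M (symd (X \<inter> Z) (Y \<inter> W))"
    using assms by (intro abs_measure_symd) auto
  also have "\<dots> \<le> measure M (symd X Y \<union> symd Z W)"
    using assms by (intro finite_measure_mono) (auto simp: symd_def)
  also have "\<dots> \<le> measure M (symd X Y) + measure M (symd Z W)"
    using assms by (intro measure_Un_le symd_sets)
  finally show ?thesis .
qed

lemma mpb_sets: "mpb M W \<Longrightarrow> A \<in> sets M \<Longrightarrow> W ` A \<in> sets M"
  unfolding mpb_def by auto

lemma mpb_measure: "mpb M W \<Longrightarrow> A \<in> sets M \<Longrightarrow> measure M (W ` A) = measure M A"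
  unfolding mpb_def by auto

lemma mpb_inj: "mpb M W \<Longrightarrow> inj_on W (space M)"
  unfolding mpb_def bij_betw_def by auto

lemma mpb_Int: assumes "mpb M W" "A \<subseteq> space M" "B \<subseteq> space M"
  shows "W ` (A \<inter> B) = W ` A \<inter> W ` B"
  using mpb_inj[OF assms(1)] assms(2,3) by (rule inj_on_image_Int)

lemma mpb_symd: assumes "mpb M W" "A \<subseteq> space M" "B \<subseteq> space M"
  shows "W ` (symd A B) = symd (W ` A) (W ` B)"
  using mpb_inj[OF assms(1)] assms(2,3) unfolding symd_def by (auto simp: inj_on_def)

lemma mpb_measure_symd: assumes "mpb M W" "A \<in> sets M" "B \<in> sets M"
  shows "measure M (symd (W ` A) (W ` B)) = measure M (symd A B)"
  using assms mpb_symd[OF assms(1), of A B] mpb_measure[OF assms(1) symd_sets[OF assms(2,3)]]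
    sets.sets_into_space by metis

lemma mpb_measure_Int: assumes "mpb M W" "A \<in> sets M" "B \<in> sets M"
  shows "measure M (W ` A \<inter> W ` B) = measure M (A \<inter> B)"
  using assms mpb_Int[OF assms(1), of A B] mpb_measure[OF assms(1), of "A \<inter> B"]
    sets.sets_into_space by (metis sets.Int)

lemma mpb_space: "mpb M W \<Longrightarrow> W ` space M = space M"
  unfolding mpb_def bij_betw_def by auto

lemma mpb_into: "mpb M W \<Longrightarrow> x \<in> space M \<Longrightarrow> W x \<in> space M"
  using mpb_space by blast

lemma mpb_image_sub: "mpb M W \<Longrightarrow> A \<subseteq> space M \<Longrightarrow> W ` A \<subseteq> space M"
  using mpb_space by blast

lemma mpb_comp: "mpb M W \<Longrightarrow> mpb M V \<Longrightarrow> mpb M (W \<circ> V)"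
  unfolding mpb_def by (auto simp: image_comp[symmetric] intro: bij_betw_trans) (metis image_image)+

lemma mpb_cong: "mpb M W \<Longrightarrow> (\<And>x. x \<in> space M \<Longrightarrow> W x = V x) \<Longrightarrow> mpb M V"
proof -
  assume a: "mpb M W" "\<And>x. x \<in> space M \<Longrightarrow> W x = V x"
  have "bij_betw V (space M) (space M)" using a bij_betw_cong unfolding mpb_def by blast
  moreover have "\<And>A. A \<in> sets M \<Longrightarrow> V ` A = W ` A"
    using a(2) sets.sets_into_space by (metis image_cong subsetD)
  ultimately show ?thesis using a(1) unfolding mpb_def by auto
qed

lemma ainv_pre: assumes "bij_betw W (space M) (space M)" "A \<subseteq> space M"
  shows "ainv M W -` A \<inter> space M = W ` A"
proof
  show "ainv M W -` A \<inter> space M \<subseteq> W ` A"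
  proof
    fix x assume x: "x \<in> ainv M W -` A \<inter> space M"
    hence "x = W (ainv M W x)" unfolding ainv_def
      using f_the_inv_into_f_bij_betw[OF assms(1)] by auto
    thus "x \<in> W ` A" using x by auto
  qed
  show "W ` A \<subseteq> ainv M W -` A \<inter> space M"
    using assms the_inv_into_f_f[of W "space M"] unfolding ainv_def bij_betw_def by auto
qed

lemma ainv_img: assumes "bij_betw W (space M) (space M)" "A \<subseteq> space M"
  shows "ainv M W ` A = W -` A \<inter> space M"
proof
  show "W -` A \<inter> space M \<subseteq> ainv M W ` A"
  proof
    fix x assume x: "x \<in> W -` A \<inter> space M"
    hence "x = ainv M W (W x)" unfolding ainv_def
      using the_inv_into_f_f[of W "space M"] assms unfolding bij_betw_def by auto
    thus "x \<in> ainv M W ` A" using x by auto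
  qed
  show "ainv M W ` A \<subseteq> W -` A \<inter> space M"
    using assms f_the_inv_into_f_bij_betw[OF assms(1)] bij_betw_the_inv_into[OF assms(1)]
    unfolding ainv_def bij_betw_def by fastforce
qed

lemma meas_pres_pre: assumes "meas_pres M f" "A \<in> sets M"
  shows "f -` A \<inter> space M \<in> sets M" "measure M (f -` A \<inter> space M) = measure M A"
proof -
  show "f -` A \<inter> space M \<in> sets M" using assms unfolding meas_pres_def by auto
  have "emeasure M (f -` A \<inter> space M) = emeasure (distr M M f) A"
    using assms unfolding meas_pres_def by (intro emeasure_distr[symmetric]) auto
  also have "\<dots> = emeasure M A" using assms unfolding meas_pres_def by metis
  finally show "measure M (f -` A \<inter> space M) = measure M A" by (simp add: measure_def)
qed

lemma aut_mpb: assumes "aut M U" shows "mpb M U" "mpb M (ainv M U)"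
proof -
  have b: "bij_betw U (space M) (space M)" using assms unfolding aut_def by auto
  have mp: "meas_pres M (ainv M U)" "meas_pres M U" using assms unfolding aut_def ainv_def by auto
  show "mpb M U" unfolding mpb_def using b meas_pres_pre[OF mp(1)] ainv_pre[OF b] sets.sets_into_space
    by metis
  show "mpb M (ainv M U)" unfolding mpb_def using b meas_pres_pre[OF mp(2)] ainv_img[OF b]
      sets.sets_into_space bij_betw_the_inv_into[OF b] unfolding ainv_def
    by metis
qed

lemma mpb_meas_pres: assumes "mpb M W" "mpb M (ainv M W)" shows "meas_pres M W"
proof -
  have b: "bij_betw W (space M) (space M)" using assms unfolding mpb_def by auto
  have pre: "W -` A \<inter> space M \<in> sets M \<and> measure M (W -` A \<inter> space M) = measure M A"
    if "A \<in> sets M" for A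
    using ainv_img[OF b sets.sets_into_space[OF that]] assms(2) that unfolding mpb_def by auto
  have meas: "W \<in> M \<rightarrow>\<^sub>M M"
    unfolding measurable_def using b pre unfolding bij_betw_def by auto
  have "distr M M W = M"
    by (rule measure_eqI) (auto simp: emeasure_distr[OF meas] emeasure_eq_measure pre)
  thus ?thesis using meas unfolding meas_pres_def by auto
qed

lemma mpb_aut: assumes "mpb M W" "mpb M (ainv M W)" shows "aut M W"
proof -
  have b: "bij_betw W (space M) (space M)" using assms unfolding mpb_def by auto
  have "ainv M (ainv M W) x = W x" if "x \<in> space M" for x
    unfolding ainv_def using b that
    by (metis bij_betw_def bij_betw_the_inv_into bij_betw_imp_surj_on the_inv_into_f_eq
        the_inv_into_onto the_inv_into_f_f imageI)
  hence "mpb M (ainv M (ainv M W))" using assms(1) mpb_cong by metis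
  hence "meas_pres M (ainv M W)" using mpb_meas_pres assms(2) by blast
  thus ?thesis using mpb_meas_pres[OF assms] b unfolding aut_def ainv_def by auto
qed

end


context prob_space begin

lemma bij_ainv_r: "bij_betw W (space M) (space M) \<Longrightarrow> z \<in> space M \<Longrightarrow> W (ainv M W z) = z"
  unfolding ainv_def by (rule f_the_inv_into_f_bij_betw)
lemma bij_ainv_l: "bij_betw W (space M) (space M) \<Longrightarrow> z \<in> space M \<Longrightarrow> ainv M W (W z) = z"
  unfolding ainv_def bij_betw_def by (auto intro: the_inv_into_f_f)
lemma bij_ainv_in: "bij_betw W (space M) (space M) \<Longrightarrow> z \<in> space M \<Longrightarrow> ainv M W z \<in> space M"
  unfolding ainv_def using bij_betw_the_inv_into bij_betw_apply by fastforce

lemma mpb_bij: "mpb M W \<Longrightarrow> bij_betw W (space M) (space M)" unfolding mpb_def by auto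

lemma conj_ainv: assumes "aut M U" "aut M S" "x \<in> space M"
  shows "ainv M (ainv M U \<circ> S \<circ> U) x = (ainv M U \<circ> ainv M S \<circ> U) x"
proof -
  have bU: "bij_betw U (space M) (space M)" and bS: "bij_betw S (space M) (space M)"
    using assms aut_mpb mpb_bij by blast+
  have bW: "bij_betw (ainv M U \<circ> S \<circ> U) (space M) (space M)"
    by (rule mpb_bij[OF mpb_comp[OF mpb_comp[OF aut_mpb(2)[OF assms(1)] aut_mpb(1)[OF assms(2)]] aut_mpb(1)[OF assms(1)]]])
  have Ux: "U x \<in> space M" by (rule bij_betw_apply[OF bU assms(3)])
  have y: "ainv M U (ainv M S (U x)) \<in> space M" by (rule bij_ainv_in[OF bU bij_ainv_in[OF bS Ux]])
  have "(ainv M U \<circ> S \<circ> U) (ainv M U (ainv M S (U x))) = x"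
    using bij_ainv_r[OF bU bij_ainv_in[OF bS Ux]] bij_ainv_r[OF bS Ux] bij_ainv_l[OF bU assms(3)] by simp
  hence "the_inv_into (space M) (ainv M U \<circ> S \<circ> U) x = ainv M U (ainv M S (U x))"
    by (intro the_inv_into_f_eq[OF _ _ y]) (use bW in \<open>auto simp: bij_betw_def\<close>)
  thus ?thesis unfolding ainv_def[of M "ainv M U \<circ> S \<circ> U"] by simp
qed

lemma conj_aut: assumes "aut M U" "aut M S" shows "aut M (ainv M U \<circ> S \<circ> U)"
proof (rule mpb_aut)
  show "mpb M (ainv M U \<circ> S \<circ> U)" by (rule mpb_comp[OF mpb_comp[OF aut_mpb(2)[OF assms(1)] aut_mpb(1)[OF assms(2)]] aut_mpb(1)[OF assms(1)]])
  have "mpb M (ainv M U \<circ> ainv M S \<circ> U)" by (rule mpb_comp[OF mpb_comp[OF aut_mpb(2)[OF assms(1)] aut_mpb(2)[OF assms(2)]] aut_mpb(1)[OF assms(1)]])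
  thus "mpb M (ainv M (ainv M U \<circ> S \<circ> U))" by (rule mpb_cong) (simp add: conj_ainv[OF assms])
qed

lemma conj_img_ainv: assumes "aut M U" "aut M S" "A \<subseteq> space M"
  shows "ainv M (ainv M U \<circ> S \<circ> U) ` A = ainv M U ` ainv M S ` U ` A"
proof -
  have "ainv M (ainv M U \<circ> S \<circ> U) ` A = (ainv M U \<circ> ainv M S \<circ> U) ` A"
    using conj_ainv[OF assms(1,2)] assms(3) by (intro image_cong) auto
  thus ?thesis by (simp add: image_comp)
qed

lemma conj_meas: assumes "aut M U" "aut M S" "A \<in> sets M" "B \<in> sets M"
  shows "measure M ((ainv M U \<circ> S \<circ> U) ` A \<inter> B) = measure M (S ` U ` A \<inter> U ` B)"
proof -
  have mU: "mpb M U" "mpb M (ainv M U)" and mS: "mpb M S" using aut_mpb assms by auto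
  have B: "B = ainv M U ` U ` B"
    using bij_ainv_l[OF mpb_bij[OF mU(1)]] sets.sets_into_space[OF assms(4)] by (force simp: image_iff)
  have "(ainv M U \<circ> S \<circ> U) ` A \<inter> B = ainv M U ` (S ` U ` A) \<inter> ainv M U ` (U ` B)"
    using B by (simp add: image_comp)
  hence "measure M ((ainv M U \<circ> S \<circ> U) ` A \<inter> B) = measure M (S ` U ` A \<inter> U ` B)"
    using mpb_measure_Int[OF mU(2) mpb_sets[OF mS mpb_sets[OF mU(1) assms(3)]] mpb_sets[OF mU(1) assms(4)]] by simp
  thus ?thesis .
qed

lemma AE_aut: assumes "aut M U" "AE y in M. P y" shows "AE x in M. P (U x)"
proof -
  have mU: "mpb M U" "mpb M (ainv M U)" using aut_mpb assms by auto
  obtain N where N: "{y \<in> space M. \<not> P y} \<subseteq> N" "N \<in> null_sets M" using assms(2) by (auto elim!: AE_E)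
  have Ns: "N \<in> sets M" using N by auto
  have "measure M N = 0" using N(2) by (simp add: emeasure_eq_measure null_sets_def)
  hence "measure M (ainv M U ` N) = 0" using mpb_measure[OF mU(2) Ns] by simp
  moreover have "ainv M U ` N \<in> sets M" using mpb_sets[OF mU(2) Ns] .
  moreover have "{x \<in> space M. \<not> P (U x)} \<subseteq> ainv M U ` N"
  proof
    fix x assume x: "x \<in> {x \<in> space M. \<not> P (U x)}"
    hence "U x \<in> N" using N(1) mpb_into[OF mU(1)] by auto
    moreover have "x = ainv M U (U x)" using bij_ainv_l[OF mpb_bij[OF mU(1)]] x by auto
    ultimately show "x \<in> ainv M U ` N" by auto
  qed
  ultimately show ?thesis by (intro AE_I[where N="ainv M U ` N"]) (auto simp: emeasure_eq_measure)
qed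

lemma conj_mixing: fixes T :: "'g::topological_group_add \<Rightarrow> 'a \<Rightarrow> 'a"
  assumes "T \<in> mixing_actions M \<Gamma>" "aut M U"
  shows "conj_action M U T \<in> mixing_actions M \<Gamma>"
proof -
  have act: "is_action M T" and mix: "mixing M \<Gamma> T" using assms(1) unfolding mixing_actions_def by auto
  have autT: "\<And>g. aut M (T g)" using act unfolding is_action_def by auto
  have mU: "mpb M U" "mpb M (ainv M U)" using aut_mpb assms by auto
  have cm: "measure M (conj_action M U T g ` A \<inter> B) = measure M (T g ` U ` A \<inter> U ` B)"
    if "A \<in> sets M" "B \<in> sets M" for g A B
    unfolding conj_action_def using conj_meas[OF assms(2) autT that] .
  have a1: "\<forall>g. aut M (conj_action M U T g)" unfolding conj_action_def using conj_aut assms(2) autT by auto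
  have a2: "AE x in M. conj_action M U T g (conj_action M U T h x) = conj_action M U T (g + h) x" for g h
  proof -
    have "AE y in M. T g (T h y) = T (g + h) y" using act unfolding is_action_def by auto
    hence "AE x in M. T g (T h (U x)) = T (g + h) (U x)" by (rule AE_aut[OF assms(2)])
    thus ?thesis
    proof (rule AE_mp, intro AE_I2 impI)
      fix x assume x: "x \<in> space M" and e: "T g (T h (U x)) = T (g + h) (U x)"
      have "T h (U x) \<in> space M" using mpb_into aut_mpb autT mU x by metis
      thus "conj_action M U T g (conj_action M U T h x) = conj_action M U T (g + h) x"
        unfolding conj_action_def using bij_ainv_r[OF mpb_bij[OF mU(1)]] e by simp
    qed
  qed
  have a3: "continuous_on UNIV (\<lambda>g. measure M (conj_action M U T g ` A \<inter> B))"
    if "A \<in> sets M" "B \<in> sets M" for A B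
  proof -
    have "continuous_on UNIV (\<lambda>g. measure M (T g ` (U ` A) \<inter> U ` B))"
      using act mpb_sets[OF mU(1)] that unfolding is_action_def by auto
    thus ?thesis using cm[OF that] by simp
  qed
  have a4: "mixing M \<Gamma> (conj_action M U T)"
    unfolding mixing_def
  proof (intro ballI allI impI)
    fix A B and e :: real assume AB: "A \<in> sets M" "B \<in> sets M" and e: "e > 0"
    obtain C where "compact C" "\<forall>g\<in>\<Gamma> - C. \<bar>measure M (T g ` (U ` A) \<inter> U ` B) - measure M (U ` A) * measure M (U ` B)\<bar> < e"
      using mix mpb_sets[OF mU(1)] AB e unfolding mixing_def by meson
    thus "\<exists>C. compact C \<and> (\<forall>g\<in>\<Gamma> - C. \<bar>measure M (conj_action M U T g ` A \<inter> B) - measure M A * measure M B\<bar> < e)"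
      using cm[OF AB] mpb_measure[OF mU(1)] AB by auto
  qed
  show ?thesis using a1 a2 a3 a4 unfolding mixing_actions_def is_action_def by auto
qed

end



lemma wsum: fixes f :: "nat \<Rightarrow> real"
  assumes "\<And>i. 0 \<le> f i" "\<And>i. f i \<le> c"
  shows "summable (\<lambda>i. (1/2)^i * f i)" "(1/2)^k * f k \<le> (\<Sum>i. (1/2)^i * f i)"
    "(\<Sum>i. (1/2)^i * f i) \<le> 2 * c" "0 \<le> (\<Sum>i. (1/2::real)^i * f i)"
proof -
  have g: "summable (\<lambda>i. (1/2::real)^i * c)" by (intro summable_mult2 summable_geometric) auto
  show s: "summable (\<lambda>i. (1/2)^i * f i)"
    by (rule summable_comparison_test'[OF g]) (use assms in \<open>auto intro!: mult_left_mono\<close>)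
  show "(1/2)^k * f k \<le> (\<Sum>i. (1/2)^i * f i)"
    using sum_le_suminf[OF s, of "{k}"] assms by auto
  have "(\<Sum>i. (1/2)^i * f i) \<le> (\<Sum>i. (1/2::real)^i * c)"
    by (intro suminf_le s g) (use assms in \<open>auto intro!: mult_left_mono\<close>)
  also have "\<dots> = 2 * c" using suminf_geometric[of "1/2::real"] by (simp add: suminf_mult2[symmetric])
  finally show "(\<Sum>i. (1/2)^i * f i) \<le> 2 * c" .
  show "0 \<le> (\<Sum>i. (1/2::real)^i * f i)" by (intro suminf_nonneg s) (use assms in auto)
qed

lemma wsum_small: fixes f :: "nat \<Rightarrow> real"
  assumes "\<And>i. 0 \<le> f i" "\<And>i. f i \<le> c" "\<And>i. i < J \<Longrightarrow> f i \<le> a" "0 \<le> a"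
  shows "(\<Sum>i. (1/2)^i * f i) \<le> 2 * a + 2 * c * (1/2)^J"
proof -
  have s: "summable (\<lambda>i. (1/2)^i * f i)" using wsum assms by blast
  have "(\<Sum>i. (1/2)^i * f i) = (\<Sum>n. (1/2)^(n+J) * f (n+J)) + (\<Sum>i<J. (1/2)^i * f i)"
    by (rule suminf_split_initial_segment[OF s])
  also have "(\<Sum>n. (1/2::real)^(n+J) * f (n+J)) = (1/2)^J * (\<Sum>n. (1/2)^n * f (n+J))"
    by (subst suminf_mult[symmetric]) (use wsum(1)[of "\<lambda>n. f (n+J)"] assms in \<open>auto simp: power_add algebra_simps\<close>)
  also have "\<dots> \<le> (1/2)^J * (2 * c)"
    by (intro mult_left_mono wsum(3)) (use assms in auto)
  also have "(\<Sum>i<J. (1/2::real)^i * f i) \<le> (\<Sum>i<J. (1/2)^i * a)"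
    by (intro sum_mono mult_left_mono) (use assms in auto)
  also have "\<dots> \<le> (\<Sum>i. (1/2)^i * a)"
    by (intro sum_le_suminf) (use wsum(1)[of "\<lambda>_. a" a] assms in auto)
  also have "\<dots> \<le> 2 * a" using wsum(3)[of "\<lambda>_. a" a] assms by auto
  finally show ?thesis by (simp add: algebra_simps)
qed

lemma aW_bound: fixes x :: "nat \<Rightarrow> nat \<Rightarrow> real"
  assumes "\<And>i j. 0 \<le> x i j" "\<And>i j. x i j \<le> a i + a j" "\<And>i. 0 \<le> a i" "\<And>i. a i \<le> 1"
  shows "(\<Sum>i. \<Sum>j. (1/2)^(i+j) * x i j) \<le> 4 * (\<Sum>i. (1/2)^i * a i)"
proof -
  define D where "D = (\<Sum>i. (1/2::real)^i * a i)"
  have sa: "summable (\<lambda>i. (1/2::real)^i * a i)" using wsum assms by blast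
  have D0: "0 \<le> D" "D \<le> 2" unfolding D_def using wsum(3,4)[of a 1] assms by auto
  have sx: "summable (\<lambda>j. (1/2::real)^j * x i j)" for i
  proof (rule wsum(1)[of "x i" 2])
    fix j show "0 \<le> x i j" using assms by auto
    have "x i j \<le> a i + a j" by (rule assms(2))
    also have "\<dots> \<le> 2" using assms(4)[of i] assms(4)[of j] by linarith
    finally show "x i j \<le> 2" .
  qed
  have inner: "(\<Sum>j. (1/2)^(i+j) * x i j) \<le> (1/2)^i * (2 * a i + D)" for i
  proof -
    have "(\<Sum>j. (1/2::real)^(i+j) * x i j) = (1/2)^i * (\<Sum>j. (1/2)^j * x i j)"
      by (subst suminf_mult[symmetric]) (use sx in \<open>auto simp: power_add algebra_simps\<close>)
    also have "(\<Sum>j. (1/2::real)^j * x i j) \<le> (\<Sum>j. (1/2)^j * a i + (1/2)^j * a j)"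
      by (intro suminf_le sx summable_add summable_mult2 summable_geometric sa)
         (use assms in \<open>auto simp: distrib_left[symmetric] add.commute[of "a j" "a i" for j] intro!: mult_left_mono\<close>)
    also have "\<dots> = 2 * a i + D"
      unfolding D_def using suminf_geometric[of "1/2::real"]
      by (subst suminf_add[symmetric]) (auto intro!: summable_mult2 summable_geometric sa simp: suminf_mult2[symmetric])
    finally show ?thesis by (simp add: mult_left_mono)
  qed
  have si: "summable (\<lambda>i. (1/2::real)^i * (2 * a i + D))"
  proof -
    have e: "(\<lambda>i. (1/2::real)^i * (2 * a i + D)) = (\<lambda>i. 2 * ((1/2)^i * a i) + D * (1/2)^i)"
      by (simp add: algebra_simps)
    show ?thesis unfolding e by (intro summable_add summable_mult sa summable_geometric) auto
  qed
  have inner0: "0 \<le> (\<Sum>j. (1/2::real)^(i+j) * x i j)" for i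
  proof -
    have e: "(\<lambda>j. (1/2::real)^(i+j) * x i j) = (\<lambda>j. (1/2)^i * ((1/2)^j * x i j))"
      by (simp add: power_add mult.assoc)
    show ?thesis unfolding e by (intro suminf_nonneg summable_mult sx) (use assms in auto)
  qed
  have so: "summable (\<lambda>i. \<Sum>j. (1/2::real)^(i+j) * x i j)"
    by (rule summable_comparison_test'[OF si]) (use inner inner0 in auto)
  have "(\<Sum>i. \<Sum>j. (1/2)^(i+j) * x i j) \<le> (\<Sum>i. (1/2::real)^i * (2 * a i + D))"
    by (intro suminf_le so si inner)
  also have "\<dots> = 2 * D + 2 * D"
  proof -
    have e: "(\<lambda>i. (1/2::real)^i * (2 * a i + D)) = (\<lambda>i. 2 * ((1/2)^i * a i) + D * (1/2)^i)"
      by (simp add: algebra_simps)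
    have g: "summable (\<lambda>i. (1/2::real)^i)" "(\<Sum>i. (1/2::real)^i) = 2"
      using suminf_geometric[of "1/2::real"] summable_geometric[of "1/2::real"] by auto
    have "(\<Sum>i. 2 * ((1/2::real)^i * a i) + D * (1/2)^i) = (\<Sum>i. 2 * ((1/2::real)^i * a i)) + (\<Sum>i. D * (1/2)^i)"
      by (intro suminf_add[symmetric] summable_mult sa g)
    also have "(\<Sum>i. 2 * ((1/2::real)^i * a i)) = 2 * D" unfolding D_def using suminf_mult[OF sa, of 2] by simp
    also have "(\<Sum>i. D * (1/2::real)^i) = D * 2" using suminf_mult[OF g(1), of D] g(2) by simp
    finally show ?thesis unfolding e by simp
  qed
  finally show ?thesis unfolding D_def by simp
qed



context prob_space begin

abbreviation "md X Y \<equiv> measure M (symd X Y)"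

lemma img_ainv_r: assumes "mpb M W" "C \<subseteq> space M" shows "W ` ainv M W ` C = C"
proof -
  have "W ` ainv M W ` C = (\<lambda>x. W (ainv M W x)) ` C" by (simp add: image_image)
  also have "\<dots> = (\<lambda>x. x) ` C" using bij_ainv_r[OF mpb_bij[OF assms(1)]] assms(2)
    by (intro image_cong) auto
  finally show ?thesis by simp
qed

lemma conj_bound: assumes "mpb M U" "mpb M (ainv M U)" "mpb M V" "mpb M (ainv M V)" "mpb M S" "A \<in> sets M"
  shows "md (ainv M U ` S ` U ` A) (ainv M V ` S ` V ` A) \<le> md (ainv M U ` (S ` U ` A)) (ainv M V ` (S ` U ` A)) + md (U ` A) (V ` A)"
proof -
  have s: "U ` A \<in> sets M" "V ` A \<in> sets M" "S ` U ` A \<in> sets M" "S ` V ` A \<in> sets M"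
    using mpb_sets assms by blast+
  have s2: "ainv M U ` S ` U ` A \<in> sets M" "ainv M V ` S ` U ` A \<in> sets M" "ainv M V ` S ` V ` A \<in> sets M"
    using mpb_sets assms s by blast+
  have "md (ainv M U ` S ` U ` A) (ainv M V ` S ` V ` A) \<le> md (ainv M U ` S ` U ` A) (ainv M V ` S ` U ` A) + md (ainv M V ` S ` U ` A) (ainv M V ` S ` V ` A)"
    by (rule symd_tri[OF s2])
  also have "md (ainv M V ` S ` U ` A) (ainv M V ` S ` V ` A) = md (S ` U ` A) (S ` V ` A)"
    by (rule mpb_measure_symd[OF assms(4) s(3,4)])
  also have "\<dots> = md (U ` A) (V ` A)" by (rule mpb_measure_symd[OF assms(5) s(1,2)])
  finally show ?thesis .
qed

lemma approx_bound: assumes "mpb M U'" "mpb M V'" "B \<in> sets M" "X \<in> sets M"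
  shows "md (U' ` B) (V' ` B) \<le> 2 * md B X + md (U' ` X) (V' ` X)"
proof -
  have s: "U' ` B \<in> sets M" "V' ` B \<in> sets M" "U' ` X \<in> sets M" "V' ` X \<in> sets M"
    using mpb_sets assms by blast+
  have "md (U' ` B) (V' ` B) \<le> md (U' ` B) (U' ` X) + md (U' ` X) (V' ` B)"
    by (rule symd_tri) (use s in auto)
  also have "md (U' ` X) (V' ` B) \<le> md (U' ` X) (V' ` X) + md (V' ` X) (V' ` B)"
    by (rule symd_tri) (use s in auto)
  also have "md (U' ` B) (U' ` X) = md B X" by (rule mpb_measure_symd[OF assms(1,3,4)])
  also have "md (V' ` X) (V' ` B) = md B X" using mpb_measure_symd[OF assms(2,4,3)] symd_comm by metis
  finally show ?thesis by simp
qed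

lemma cont_T: fixes T :: "'g::topological_group_add \<Rightarrow> 'a \<Rightarrow> 'a"
  assumes act: "is_action M T" and C: "C \<in> sets M"
  shows "continuous_on UNIV (\<lambda>g. md (T g ` C) (T g0 ` C))"
    "continuous_on UNIV (\<lambda>g. md (ainv M (T g) ` C) (ainv M (T g0) ` C))"
proof -
  have autT: "\<And>g. aut M (T g)" using act unfolding is_action_def by auto
  have m: "\<And>g. mpb M (T g)" "\<And>g. mpb M (ainv M (T g))" using aut_mpb autT by auto
  have cont: "\<And>A B. A \<in> sets M \<Longrightarrow> B \<in> sets M \<Longrightarrow> continuous_on UNIV (\<lambda>g. measure M (T g ` A \<inter> B))"
    using act unfolding is_action_def by auto
  have e1: "md (T g ` C) (T g0 ` C) = 2 * measure M C - 2 * measure M (T g ` C \<inter> T g0 ` C)" for g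
    using measure_symd[OF mpb_sets[OF m(1) C] mpb_sets[OF m(1) C]] mpb_measure[OF m(1) C] by simp
  show "continuous_on UNIV (\<lambda>g. md (T g ` C) (T g0 ` C))"
    unfolding e1 by (intro continuous_intros cont C mpb_sets[OF m(1) C])
  define E where "E = ainv M (T g0) ` C"
  have E: "E \<in> sets M" "measure M E = measure M C" unfolding E_def using mpb_sets mpb_measure m(2) C by auto
  have e2: "md (ainv M (T g) ` C) (ainv M (T g0) ` C) = 2 * measure M C - 2 * measure M (T g ` E \<inter> C)" for g
  proof -
    have "md (ainv M (T g) ` C) (ainv M (T g0) ` C) = md (T g ` ainv M (T g) ` C) (T g ` E)"
      unfolding E_def using mpb_measure_symd[OF m(1) mpb_sets[OF m(2) C] mpb_sets[OF m(2) C]] by simp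
    also have "T g ` ainv M (T g) ` C = C"
      by (rule img_ainv_r[OF m(1) sets.sets_into_space[OF C]])
    also have "md C (T g ` E) = 2 * measure M C - 2 * measure M (T g ` E \<inter> C)"
      using measure_symd[OF C mpb_sets[OF m(1) E(1)]] mpb_measure[OF m(1) E(1)] E(2) by (simp add: Int_commute)
    finally show ?thesis .
  qed
  show "continuous_on UNIV (\<lambda>g. md (ainv M (T g) ` C) (ainv M (T g0) ` C))"
    unfolding e2 by (intro continuous_intros cont C E(1))
qed

lemma TB: fixes T :: "'g::topological_group_add \<Rightarrow> 'a \<Rightarrow> 'a"
  assumes act: "is_action M T" and C: "C \<in> sets M" and K: "compact K" and eta: "\<eta> > 0"
    and dense: "\<And>B e. B \<in> sets M \<Longrightarrow> e > 0 \<Longrightarrow> \<exists>k. md (Af k) B < e"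
    and Af: "\<And>k. Af k \<in> sets M"
  shows "\<exists>F. finite F \<and> (\<forall>g\<in>K. (\<exists>k\<in>F. md (T g ` C) (Af k) < \<eta>) \<and> (\<exists>k\<in>F. md (ainv M (T g) ` C) (Af k) < \<eta>))"
proof -
  have autT: "\<And>g. aut M (T g)" using act unfolding is_action_def by auto
  have m: "\<And>g. mpb M (T g)" "\<And>g. mpb M (ainv M (T g))" using aut_mpb autT by auto
  have s: "\<And>g. T g ` C \<in> sets M" "\<And>g. ainv M (T g) ` C \<in> sets M" using mpb_sets m C by auto
  define \<phi> where "\<phi> g0 g = md (T g ` C) (T g0 ` C) + md (ainv M (T g) ` C) (ainv M (T g0) ` C)" for g0 g
  define Op where "Op g0 = {g. \<phi> g0 g < \<eta>/2}" for g0
  have "open (Op g0)" for g0 unfolding Op_def \<phi>_def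
    by (intro open_Collect_less continuous_intros cont_T[OF act C])
  moreover have "K \<subseteq> (\<Union>g0\<in>K. Op g0)" using eta by (auto simp: Op_def \<phi>_def symd_def)
  ultimately obtain K' where K': "K' \<subseteq> K" "finite K'" "K \<subseteq> (\<Union>g0\<in>K'. Op g0)"
    using compactE_image[OF K, of K Op] by metis
  have "\<exists>k. md (Af k) (T g0 ` C) < \<eta>/2" for g0 using dense[OF s(1), of "\<eta>/2"] eta by simp
  then obtain k1 where k1: "\<And>g0. md (Af (k1 g0)) (T g0 ` C) < \<eta>/2" by metis
  have "\<exists>k. md (Af k) (ainv M (T g0) ` C) < \<eta>/2" for g0 using dense[OF s(2), of "\<eta>/2"] eta by simp
  then obtain k2 where k2: "\<And>g0. md (Af (k2 g0)) (ainv M (T g0) ` C) < \<eta>/2" by metis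
  define F where "F = k1 ` K' \<union> k2 ` K'"
  have "finite F" unfolding F_def using K' by auto
  moreover have "(\<exists>k\<in>F. md (T g ` C) (Af k) < \<eta>) \<and> (\<exists>k\<in>F. md (ainv M (T g) ` C) (Af k) < \<eta>)" if g: "g \<in> K" for g
  proof -
    obtain g0 where g0: "g0 \<in> K'" "\<phi> g0 g < \<eta>/2" using K'(3) g unfolding Op_def by auto
    have p1: "md (T g ` C) (T g0 ` C) < \<eta>/2" and p2: "md (ainv M (T g) ` C) (ainv M (T g0) ` C) < \<eta>/2"
      using g0(2) unfolding \<phi>_def by (smt (verit) symd_nonneg)+
    have "md (T g ` C) (Af (k1 g0)) \<le> md (T g ` C) (T g0 ` C) + md (T g0 ` C) (Af (k1 g0))"
      by (rule symd_tri) (use s Af in auto)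
    also have "md (T g0 ` C) (Af (k1 g0)) < \<eta>/2" using k1[of g0] symd_comm by metis
    finally have 1: "md (T g ` C) (Af (k1 g0)) < \<eta>" using p1 by simp
    have "md (ainv M (T g) ` C) (Af (k2 g0)) \<le> md (ainv M (T g) ` C) (ainv M (T g0) ` C) + md (ainv M (T g0) ` C) (Af (k2 g0))"
      by (rule symd_tri) (use s Af in auto)
    also have "md (ainv M (T g0) ` C) (Af (k2 g0)) < \<eta>/2" using k2[of g0] symd_comm by metis
    finally have 2: "md (ainv M (T g) ` C) (Af (k2 g0)) < \<eta>" using p2 by simp
    show ?thesis using 1 2 g0(1) unfolding F_def by blast
  qed
  ultimately show ?thesis by blast
qed

end



lemma small_helper: fixes y d \<eta> :: real
  assumes "(1/2)^k * y \<le> d" "d < \<eta> * (1/2)^L" "k \<le> L" "\<eta> > 0"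
  shows "y < \<eta>"
proof -
  have "(1/2::real)^L \<le> (1/2)^k" using assms(3) by (intro power_decreasing) auto
  hence "(1/2)^k * y < \<eta> * (1/2)^k" using assms(1,2,4) by (smt (verit) mult_left_mono)
  thus ?thesis by simp
qed

context prob_space begin

lemma cj_bound: assumes "aut M U" "aut M V" "mpb M S" "A \<in> sets M" "X \<in> sets M"
  shows "md (ainv M U ` S ` U ` A) (ainv M V ` S ` V ` A) \<le> 2 * md (S ` U ` A) X + md (ainv M U ` X) (ainv M V ` X) + md (U ` A) (V ` A)"
proof -
  have mU: "mpb M U" "mpb M (ainv M U)" and mV: "mpb M V" "mpb M (ainv M V)" using aut_mpb assms by auto
  have B: "S ` U ` A \<in> sets M" using mpb_sets assms mU by blast
  show ?thesis using conj_bound[OF mU mV assms(3,4)] approx_bound[OF mU(2) mV(2) B assms(5)] by linarith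
qed

lemma conj_img: "conj_action M U T g ` A = ainv M U ` T g ` U ` A"
  unfolding conj_action_def by (simp add: image_comp)

lemma cont_part: fixes T :: "'g::topological_group_add \<Rightarrow> 'a \<Rightarrow> 'a" and K :: "nat \<Rightarrow> 'g set"
  assumes act: "is_action M T"
    and dense: "\<And>B e. B \<in> sets M \<Longrightarrow> e > 0 \<Longrightarrow> \<exists>k. md (Af k) B < e"
    and Af: "\<And>k. Af k \<in> sets M"
    and Kc: "\<And>i. i \<in> I \<Longrightarrow> compact (K i)" "\<And>i. i \<in> I \<Longrightarrow> K i \<noteq> {}"
    and Gne: "\<Gamma> \<noteq> {}" and U: "aut M U" and e: "e > 0"
  shows "\<exists>\<delta>>0. \<forall>V. aut M V \<and> dW M Af U V < \<delta> \<longrightarrow>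
           leash M Af I K \<Gamma> (conj_action M U T) (conj_action M V T) < e"
proof -
  have autT: "\<And>g. aut M (T g)" using act unfolding is_action_def by auto
  have mT: "\<And>g. mpb M (T g)" "\<And>g. mpb M (ainv M (T g))" using aut_mpb autT by auto
  have mU: "mpb M U" "mpb M (ainv M U)" using aut_mpb U by auto
  have UA: "\<And>j. U ` Af j \<in> sets M" using mpb_sets mU Af by blast
  define \<sigma> where "\<sigma> = e / 16"
  define \<tau> where "\<tau> = \<sigma> / 8"
  define \<eta> where "\<eta> = \<tau> / 4"
  have pos: "\<sigma> > 0" "\<tau> > 0" "\<eta> > 0" using e unfolding \<sigma>_def \<tau>_def \<eta>_def by auto
  obtain N where N: "(1/2::real)^N < e / 64" using real_arch_pow_inv[of "e/64" "1/2::real"] e by auto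
  obtain J where J: "(1/2::real)^J < \<sigma> / 8" using real_arch_pow_inv[of "\<sigma>/8" "1/2::real"] pos by auto
  define P where "P = {..<N} \<times> {..<J}"
  have "\<forall>p\<in>P. \<exists>F. finite F \<and> (fst p \<in> I \<longrightarrow> (\<forall>g\<in>K (fst p).
      (\<exists>k\<in>F. md (T g ` U ` Af (snd p)) (Af k) < \<eta>) \<and> (\<exists>k\<in>F. md (ainv M (T g) ` U ` Af (snd p)) (Af k) < \<eta>)))"
  proof
    fix p assume "p \<in> P"
    show "\<exists>F. finite F \<and> (fst p \<in> I \<longrightarrow> (\<forall>g\<in>K (fst p).
      (\<exists>k\<in>F. md (T g ` U ` Af (snd p)) (Af k) < \<eta>) \<and> (\<exists>k\<in>F. md (ainv M (T g) ` U ` Af (snd p)) (Af k) < \<eta>)))"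
    proof (cases "fst p \<in> I")
      case True
      then show ?thesis using TB[OF act UA Kc(1)[OF True] pos(3) dense Af] by blast
    next
      case False
      then show ?thesis by blast
    qed
  qed
  then obtain Fs where Fs: "\<And>p. p \<in> P \<Longrightarrow> finite (Fs p)"
    "\<And>p. p \<in> P \<Longrightarrow> fst p \<in> I \<Longrightarrow> \<forall>g\<in>K (fst p).
      (\<exists>k\<in>Fs p. md (T g ` U ` Af (snd p)) (Af k) < \<eta>) \<and> (\<exists>k\<in>Fs p. md (ainv M (T g) ` U ` Af (snd p)) (Af k) < \<eta>)"
    by metis
  define Fa where "Fa = (\<Union>p\<in>P. Fs p) \<union> {..<J}"
  have Fa: "finite Fa" unfolding Fa_def P_def using Fs(1) P_def by auto
  define L where "L = Max Fa"
  have L: "\<And>k. k \<in> Fa \<Longrightarrow> k \<le> L" unfolding L_def using Fa by auto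
  define \<delta> where "\<delta> = min (e / 8) (\<eta> * (1/2)^L)"
  have \<delta>: "\<delta> > 0" using e pos unfolding \<delta>_def by auto
  show ?thesis
  proof (intro exI[of _ \<delta>] conjI \<delta> allI impI, elim conjE)
    fix V assume V: "aut M V" and dV: "dW M Af U V < \<delta>"
    have mV: "mpb M V" "mpb M (ainv M V)" using aut_mpb V by auto
    define a where "a i = md (U ` Af i) (V ` Af i)" for i
    define b where "b i = md (ainv M U ` Af i) (ainv M V ` Af i)" for i
    have ab: "0 \<le> a i" "a i \<le> 1" "0 \<le> b i" "b i \<le> 1" for i unfolding a_def b_def by (auto simp: prob_le_1)
    have ab2: "0 \<le> a i + b i" "a i + b i \<le> 2" for i using ab[of i] by auto
    have dWe: "dW M Af U V = (\<Sum>i. (1/2)^i * (a i + b i))" unfolding dW_def a_def b_def ..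
    have abd: "(1/2)^i * (a i + b i) \<le> dW M Af U V" for i
      unfolding dWe by (rule wsum(2)[of _ 2]) (use ab2 in auto)
    have aS: "(1/2)^i * a i \<le> dW M Af U V" "(1/2)^i * b i \<le> dW M Af U V" for i
    proof -
      have "(1/2::real)^i * a i \<le> (1/2)^i * (a i + b i)" "(1/2::real)^i * b i \<le> (1/2)^i * (a i + b i)"
        by (intro mult_left_mono; use ab[of i] in simp)+
      thus "(1/2)^i * a i \<le> dW M Af U V" "(1/2)^i * b i \<le> dW M Af U V" using abd[of i] by linarith+
    qed
    have aW: "aW M Af (conj_action M U T g) (conj_action M V T g) \<le> 4 * dW M Af U V" for g
    proof -
      have x: "\<bar>measure M (conj_action M U T g ` Af i \<inter> Af j) - measure M (conj_action M V T g ` Af i \<inter> Af j)\<bar> \<le> a i + a j" for i j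
      proof -
        have "\<bar>measure M (conj_action M U T g ` Af i \<inter> Af j) - measure M (conj_action M V T g ` Af i \<inter> Af j)\<bar>
            = \<bar>measure M (T g ` U ` Af i \<inter> U ` Af j) - measure M (T g ` V ` Af i \<inter> V ` Af j)\<bar>"
          unfolding conj_action_def using conj_meas[OF U autT Af Af] conj_meas[OF V autT Af Af] by simp
        also have "\<dots> \<le> md (T g ` U ` Af i) (T g ` V ` Af i) + md (U ` Af j) (V ` Af j)"
          by (intro abs_measure_Int) (use mpb_sets mU mV mT Af in blast)+
        also have "md (T g ` U ` Af i) (T g ` V ` Af i) = a i"
          unfolding a_def by (intro mpb_measure_symd mT) (use mpb_sets mU mV Af in blast)+
        finally show ?thesis unfolding a_def by simp
      qed
      have "aW M Af (conj_action M U T g) (conj_action M V T g) \<le> 4 * (\<Sum>i. (1/2)^i * a i)"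
        unfolding aW_def by (rule aW_bound) (use x ab in auto)
      also have "(\<Sum>i. (1/2)^i * a i) \<le> dW M Af U V"
      proof -
        have s1: "summable (\<lambda>i. (1/2::real)^i * a i)" by (rule wsum(1)[of _ 1]) (use ab in auto)
        have s2: "summable (\<lambda>i. (1/2::real)^i * (a i + b i))" by (rule wsum(1)[of _ 2]) (use ab2 in auto)
        show ?thesis unfolding dWe by (rule suminf_le[OF _ s1 s2]) (use ab in \<open>auto intro!: mult_left_mono\<close>)
      qed
      finally show ?thesis by simp
    qed
    have SaW: "(SUP g\<in>\<Gamma>. aW M Af (conj_action M U T g) (conj_action M V T g)) \<le> 4 * dW M Af U V"
      by (rule cSUP_least[OF Gne aW])
    define c where "c g j = md (conj_action M U T g ` Af j) (conj_action M V T g ` Af j)" for g j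
    define d where "d g j = md (ainv M (conj_action M U T g) ` Af j) (ainv M (conj_action M V T g) ` Af j)" for g j
    have cd: "0 \<le> c g j" "c g j \<le> 1" "0 \<le> d g j" "d g j \<le> 1" for g j
      unfolding c_def d_def by (auto simp: prob_le_1)
    have dWc: "dW M Af (conj_action M U T g) (conj_action M V T g) = (\<Sum>j. (1/2)^j * (c g j + d g j))" for g
      unfolding dW_def c_def d_def ..
    have cd2: "0 \<le> c g j + d g j" "c g j + d g j \<le> 2" for g j using cd[of g j] by auto
    have dW4: "0 \<le> dW M Af (conj_action M U T g) (conj_action M V T g)" "dW M Af (conj_action M U T g) (conj_action M V T g) \<le> 4" for g
      unfolding dWc using wsum(3,4)[of "\<lambda>j. c g j + d g j" 2] cd2 by auto
    have small: "c g j \<le> \<tau> \<and> d g j \<le> \<tau>" if i: "i < N" "i \<in> I" and g: "g \<in> K i" and j: "j < J" for i g j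
    proof -
      have p: "(i, j) \<in> P" unfolding P_def using i j by auto
      obtain k1 where k1: "k1 \<in> Fs (i,j)" "md (T g ` U ` Af j) (Af k1) < \<eta>" using Fs(2)[OF p] i g by auto
      obtain k2 where k2: "k2 \<in> Fs (i,j)" "md (ainv M (T g) ` U ` Af j) (Af k2) < \<eta>" using Fs(2)[OF p] i g by auto
      have kL: "k1 \<le> L" "k2 \<le> L" "j \<le> L" using L k1(1) k2(1) p j unfolding Fa_def by auto
      have dV': "dW M Af U V < \<eta> * (1/2)^L" using dV unfolding \<delta>_def by auto
      have b1: "b k1 < \<eta>" "b k2 < \<eta>" "a j < \<eta>"
        using small_helper[OF aS(2) dV' kL(1) pos(3)] small_helper[OF aS(2) dV' kL(2) pos(3)]
          small_helper[OF aS(1) dV' kL(3) pos(3)] by auto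
      have "c g j \<le> 2 * md (T g ` U ` Af j) (Af k1) + b k1 + a j"
        unfolding c_def conj_img a_def b_def by (rule cj_bound[OF U V mT(1) Af Af])
      hence c1: "c g j < 4 * \<eta>" using k1 b1 by linarith
      have "d g j = md (ainv M U ` ainv M (T g) ` U ` Af j) (ainv M V ` ainv M (T g) ` V ` Af j)"
        unfolding d_def conj_action_def
        using conj_img_ainv[OF U autT sets.sets_into_space[OF Af]] conj_img_ainv[OF V autT sets.sets_into_space[OF Af]]
        by simp
      also have "\<dots> \<le> 2 * md (ainv M (T g) ` U ` Af j) (Af k2) + b k2 + a j"
        unfolding a_def b_def by (rule cj_bound[OF U V mT(2) Af Af])
      finally have d1: "d g j < 4 * \<eta>" using k2 b1 by linarith
      show ?thesis using c1 d1 unfolding \<eta>_def by auto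
    qed
    define s where "s i = (SUP g\<in>K i. dW M Af (conj_action M U T g) (conj_action M V T g))" for i
    define f where "f i = (if i \<in> I then s i else 0)" for i
    have sb: "0 \<le> s i \<and> s i \<le> 4" if iI: "i \<in> I" for i
    proof -
      obtain g0 where g0: "g0 \<in> K i" using Kc(2)[OF iI] by auto
      have "s i \<le> 4" unfolding s_def by (rule cSUP_least) (use Kc(2)[OF iI] dW4 in auto)
      moreover have "dW M Af (conj_action M U T g0) (conj_action M V T g0) \<le> s i"
        unfolding s_def by (rule cSUP_upper[OF g0]) (use dW4 in \<open>auto intro!: bdd_aboveI2\<close>)
      ultimately show ?thesis using dW4[of g0] by linarith
    qed
    have sN: "s i \<le> \<sigma>" if "i < N" "i \<in> I" for i
    proof -
      have "dW M Af (conj_action M U T g) (conj_action M V T g) \<le> \<sigma>" if g: "g \<in> K i" for g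
      proof -
        have sm2: "c g j + d g j \<le> 2 * \<tau>" if "j < J" for j
          using small[OF \<open>i < N\<close> \<open>i \<in> I\<close> g that] by linarith
        have "dW M Af (conj_action M U T g) (conj_action M V T g) \<le> 2 * (2 * \<tau>) + 2 * 2 * (1/2)^J"
          unfolding dWc by (rule wsum_small) (use cd2 sm2 pos in auto)
        thus ?thesis using J unfolding \<tau>_def by simp
      qed
      thus ?thesis unfolding s_def by (intro cSUP_least) (use Kc(2)[OF \<open>i \<in> I\<close>] in auto)
    qed
    have dGe: "dG M Af I K (conj_action M U T) (conj_action M V T) = (\<Sum>i. (1/2)^i * f i)"
      unfolding dG_def f_def s_def by (intro suminf_cong) auto
    have "dG M Af I K (conj_action M U T) (conj_action M V T) \<le> 2 * \<sigma> + 2 * 4 * (1/2)^N"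
      unfolding dGe by (rule wsum_small) (use sb sN pos in \<open>auto simp: f_def\<close>)
    also have "\<dots> < e / 4" using N unfolding \<sigma>_def by simp
    finally have dG: "dG M Af I K (conj_action M U T) (conj_action M V T) < e / 4" .
    have "4 * dW M Af U V < e / 2" using dV unfolding \<delta>_def by simp
    thus "leash M Af I K \<Gamma> (conj_action M U T) (conj_action M V T) < e"
      unfolding leash_def using dG SaW e by linarith
  qed
qed

end


theorem mainTheorem11:
  fixes M :: "'a measure" and Af :: "nat \<Rightarrow> 'a set"
    and I :: "nat set" and K :: "nat \<Rightarrow> 'g::{topological_group_add, t2_space, first_countable_topology} set"
    and \<Gamma> :: "'g set" and T :: "'g \<Rightarrow> 'a \<Rightarrow> 'a"
  assumes "prob_space M" and "atomless M" and "generating_dense_family M Af"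
    and "locally_compact_space (euclidean :: 'g topology)"
    and "admissible_compacts I K"
    and "\<not> (\<exists>C. compact C \<and> \<Gamma> \<subseteq> C)"
    and "T \<in> mixing_actions M \<Gamma>"
  shows "(\<forall>U. aut M U \<longrightarrow> conj_action M U T \<in> mixing_actions M \<Gamma>) \<and>
         (\<forall>U. aut M U \<longrightarrow> (\<forall>e>0. \<exists>\<delta>>0. \<forall>V. aut M V \<and> dW M Af U V < \<delta> \<longrightarrow>
              leash M Af I K \<Gamma> (conj_action M U T) (conj_action M V T) < e))"
proof -
  interpret prob_space M by (rule assms(1))
  have act: "is_action M T" using assms(7) by (simp add: mixing_actions_def)
  have Af: "\<And>k. Af k \<in> sets M" using assms(3) by (auto simp: generating_dense_family_def)
  have dense: "\<exists>k. measure M (symd (Af k) B) < e" if "B \<in> sets M" "e > 0" for B e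
    using assms(3) that unfolding generating_dense_family_def symd_def by blast
  have Kc: "\<And>i. i \<in> I \<Longrightarrow> compact (K i)" "\<And>i. i \<in> I \<Longrightarrow> K i \<noteq> {}"
    using assms(5) interior_subset unfolding admissible_compacts_def by blast+
  have Gne: "\<Gamma> \<noteq> {}" using assms(6) compact_empty by blast
  show ?thesis using conj_mixing[OF assms(7)] cont_part[OF act dense Af Kc Gne] by auto
qed

end
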